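(* Let $\Lambda$ be a lattice of rank $s$ and $\bar a=(a_1,\ldots,a_l)\in(\mathcal F^0(\Lambda,\bar K))^l$. Suppose the convolution ideal generated by $a_1,\ldots,a_l$ in $\mathcal F^0(\Lambda,\bar K)$ contains $s$ nonzero functions $b_1,\ldots,b_s$ with $\mathrm{supp}(b_j)\subseteq\mathbb Zv_j$, $j=1,\ldots,s$, where $v_1,\ldots,v_s\in\Lambda$ are linearly independent. Then every $f\in\bigcap_{j=1}^l\ker(\Delta_{a_j})$ is pluri-periodic, and its period lattice $\Lambda(f)$ contains a rank $s$ sublattice $\sum_{j=1}^sm_j\mathbb Zv_j$ with integers $m_j>0$ depending only on $\bar a$.
   Context: $K=\mathrm{GF}(p^r)$, $\bar K$ an algebraic closure; a lattice is a free abelian group of finite rank. $\mathcal F^0(\Lambda,\bar K)$ is the ring of finitely supported functions $\Lambda\to\bar K$ under convolution $(f*a)(v)=\sum_uf(u)a(v-u)$; $\Delta_a$ acts on all functions $\Lambda\to\bar K$ by $f\mapsto f*a$. The period lattice of $f$ is $\Lambda(f)=\{v\in\Lambda: f(\cdot+v)=f\}$; pluri-periodic means $\Lambda(f)$ has finite index. *)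

theory Defs
  imports "HOL-Analysis.Analysis" "HOL-Computational_Algebra.Polynomial"
begin

text \<open>The lattice of rank s is modelled as int ^ 'n with s = CARD('n).
  Functions on the lattice with values in the field 'k.\<close>

definition finsupp :: "('l \<Rightarrow> 'k::zero) \<Rightarrow> bool" where
  "finsupp a \<longleftrightarrow> finite {u. a u \<noteq> 0}"

definition supp :: "('l \<Rightarrow> 'k::zero) \<Rightarrow> 'l set" where
  "supp a = {u. a u \<noteq> 0}"

definition conv :: "('l::ab_group_add \<Rightarrow> 'k::comm_ring_1) \<Rightarrow> ('l \<Rightarrow> 'k) \<Rightarrow> 'l \<Rightarrow> 'k" where
  "conv f a v = (\<Sum>w\<in>supp a. f (v - w) * a w)"

definition conv_ideal :: "nat \<Rightarrow> (nat \<Rightarrow> 'l::ab_group_add \<Rightarrow> 'k::comm_ring_1) \<Rightarrow> ('l \<Rightarrow> 'k) set" where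
  "conv_ideal l a = {(\<lambda>v. \<Sum>i<l. conv (c i) (a i) v) | c. \<forall>i<l. finsupp (c i)}"

definition period_lattice :: "('l::ab_group_add \<Rightarrow> 'k) \<Rightarrow> 'l set" where
  "period_lattice f = {x. (\<lambda>u. f (u + x)) = f}"

text \<open>Pluri-periodic: the period lattice has finite index, i.e. finitely many cosets.\<close>
definition pluri_periodic :: "('l::ab_group_add \<Rightarrow> 'k) \<Rightarrow> bool" where
  "pluri_periodic f \<longleftrightarrow> finite ((\<lambda>x. (\<lambda>y. x + y) ` period_lattice f) ` UNIV)"

definition lin_indep_int :: "('n::finite \<Rightarrow> int ^ 'm) \<Rightarrow> bool" where
  "lin_indep_int v \<longleftrightarrow> (\<forall>c::'n \<Rightarrow> int. (\<Sum>j\<in>UNIV. c j *s v j) = 0 \<longrightarrow> (\<forall>j. c j = 0))"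

definition alg_closed :: "'k::field itself \<Rightarrow> bool" where
  "alg_closed _ \<longleftrightarrow> (\<forall>q::'k poly. degree q > 0 \<longrightarrow> (\<exists>x. poly q x = 0))"

definition algebraic_over_prime_field :: "'k::field itself \<Rightarrow> bool" where
  "algebraic_over_prime_field _ \<longleftrightarrow>
     (\<forall>x::'k. \<exists>q::'k poly. q \<noteq> 0 \<and> (\<forall>i. coeff q i \<in> range of_int) \<and> poly q x = 0)"

end

theory Submission
  imports Defs "HOL-Computational_Algebra.Primes"
begin

lemma of_nat_frob:
  assumes "prime CHAR('k::field)"
  shows "(of_nat n :: 'k) ^ CHAR('k) = of_nat n"
proof (induction n)
  case 0 then show ?case using assms by (simp add: prime_gt_0_nat)
next
  case (Suc n)
  have "(of_nat (Suc n) :: 'k) ^ CHAR('k) = (of_nat n + 1) ^ CHAR('k)" by (simp add: add.commute)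
  also have "\<dots> = of_nat n ^ CHAR('k) + 1 ^ CHAR('k)"
    by (rule freshmans_dream[OF assms refl])
  finally show ?case using Suc by simp
qed

lemma of_int_frob:
  assumes "prime CHAR('k::field)"
  shows "(of_int z :: 'k) ^ CHAR('k) = of_int z"
proof -
  have c0: "int CHAR('k) > 0" using assms prime_gt_0_nat by auto
  have "z = z mod int CHAR('k) + int CHAR('k) * (z div int CHAR('k))" by simp
  then have "(of_int z :: 'k) = of_int (z mod int CHAR('k)) + of_nat CHAR('k) * of_int (z div int CHAR('k))"
    by (metis of_int_add of_int_mult of_int_of_nat_eq)
  also have "\<dots> = of_int (z mod int CHAR('k))" by simp
  also have "\<dots> = of_nat (nat (z mod int CHAR('k)))"
    using c0 by simp
  finally have e: "(of_int z :: 'k) = of_nat (nat (z mod int CHAR('k)))" .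
  show ?thesis unfolding e by (rule of_nat_frob[OF assms])
qed

lemma of_int_frob_pow:
  assumes "prime CHAR('k::field)"
  shows "(of_int z :: 'k) ^ (CHAR('k) ^ j) = of_int z"
proof (induction j)
  case 0 then show ?case by simp
next
  case (Suc j)
  have "(of_int z :: 'k) ^ (CHAR('k) ^ Suc j) = ((of_int z :: 'k) ^ (CHAR('k) ^ j)) ^ CHAR('k)"
    by (simp only: power_Suc2 power_mult)
  then show ?case using Suc of_int_frob[OF assms] by simp
qed

lemma root_unity:
  fixes r :: "'k::field"
  assumes pc: "prime CHAR('k)" and r0: "r \<noteq> 0" and q0: "q \<noteq> 0"
    and qc: "\<forall>i. coeff q i \<in> range of_int" and qr: "poly q r = 0"
  shows "\<exists>n>0. r ^ n = 1"
proof -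
  define c where "c = CHAR('k)"
  have c1: "c > 1" using pc prime_gt_1_nat c_def by auto
  have h: "poly q (r ^ (c ^ j)) = 0" for j
  proof -
    have "poly q (r ^ (c ^ j)) = (\<Sum>i\<le>degree q. coeff q i * (r ^ (c ^ j)) ^ i)"
      by (simp add: poly_altdef)
    also have "\<dots> = (\<Sum>i\<le>degree q. (coeff q i * r ^ i) ^ (c ^ j))"
    proof (rule sum.cong[OF refl])
      fix i
      obtain z where z: "coeff q i = of_int z" using qc by blast
      show "coeff q i * (r ^ c ^ j) ^ i = (coeff q i * r ^ i) ^ c ^ j"
        unfolding z power_mult_distrib c_def of_int_frob_pow[OF pc]
        by (simp add: power_mult[symmetric] mult.commute)
    qed
    also have "\<dots> = (\<Sum>i\<le>degree q. coeff q i * r ^ i) ^ (c ^ j)"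
      by (rule freshmans_dream_sum'[symmetric, OF pc]) (simp add: c_def)
    also have "\<dots> = 0" using qr c1 by (simp add: poly_altdef)
    finally show ?thesis .
  qed
  have fin: "finite (range (\<lambda>j. r ^ (c ^ j)))"
    by (rule finite_subset[OF _ poly_roots_finite[OF q0]]) (use h in auto)
  have "\<not> inj (\<lambda>j. r ^ (c ^ j))"
    using fin finite_imageD by (metis infinite_UNIV_nat)
  then obtain a b where ab: "a < b" "r ^ (c ^ a) = r ^ (c ^ b)"
    unfolding inj_def by (metis linorder_neqE_nat)
  have lt: "c ^ a < c ^ b" using c1 ab(1) by (simp add: power_strict_increasing)
  have "r ^ (c ^ b) = r ^ (c ^ a) * r ^ (c ^ b - c ^ a)"
    using lt by (simp add: power_add[symmetric])
  then have "r ^ (c ^ b - c ^ a) = 1" using ab(2) r0 by simp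
  then show ?thesis using lt by (intro exI[of _ "c ^ b - c ^ a"]) simp
qed

lemma dvd_cyc:
  fixes B :: "'k::field poly"
  assumes pc: "prime CHAR('k)" and ac: "alg_closed TYPE('k)" and ap: "algebraic_over_prime_field TYPE('k)"
  shows "B \<noteq> 0 \<Longrightarrow> poly B 0 \<noteq> 0 \<Longrightarrow> \<exists>n>0. B dvd ([:0,1:]^n - 1)^(degree B)"
proof (induction "degree B" arbitrary: B)
  case 0
  then have "is_unit B" by (simp add: is_unit_iff_degree)
  then show ?case using 0 by (intro exI[of _ 1]) (auto simp flip: 0(1))
next
  case (Suc d)
  obtain r where r: "poly B r = 0" using ac Suc(2) unfolding alg_closed_def by (metis zero_less_Suc)
  have r0: "r \<noteq> 0" using r Suc(4) by auto
  have "[:-r,1:] dvd B" using r by (simp add: poly_eq_0_iff_dvd)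
  then obtain Q where BQ: "B = [:-r,1:] * Q" by (elim dvdE)
  have Q0: "Q \<noteq> 0" using BQ Suc(3) by auto
  have "degree ([:-r,1:] * Q) = degree [:-r,1:] + degree Q" by (rule degree_mult_eq) (use Q0 in auto)
  then have dQ: "d = degree Q" using Suc(2) BQ by simp
  have pQ: "poly Q 0 \<noteq> 0" using Suc(4) BQ by simp
  obtain n2 where n2: "n2 > 0" "Q dvd ([:0,1:]^n2 - 1)^d"
    using Suc(1)[OF dQ Q0 pQ] dQ by auto
  obtain q where q: "q \<noteq> 0" "\<forall>i. coeff q i \<in> range of_int" "poly q r = 0"
    using ap unfolding algebraic_over_prime_field_def by blast
  obtain n1 where n1: "n1 > 0" "r ^ n1 = 1" using root_unity[OF pc r0 q] by blast
  define n where "n = n1 * n2"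
  have d1: "[:-r,1:] dvd [:0,1:]^n1 - 1"
    using n1 by (simp add: poly_eq_0_iff_dvd[symmetric])
  have gen: "([:0,1:]::'k poly)^a - 1 dvd [:0,1:]^(a*b) - 1" for a b
  proof -
    have "([:0,1:]::'k poly)^(a*b) - 1 = ([:0,1:]^a)^b - 1" by (simp add: power_mult)
    also have "\<dots> = ([:0,1:]^a - 1) * (\<Sum>i<b. ([:0,1:]^a)^i)" by (rule power_diff_1_eq)
    finally show ?thesis by simp
  qed
  have d2: "[:-r,1:] dvd [:0,1:]^n - 1"
    using dvd_trans[OF d1 gen] n_def by blast
  have d3: "Q dvd ([:0,1:]^n - 1)^d"
    using dvd_trans[OF n2(2) dvd_power_same[OF gen[of n2 n1]]] n_def by (simp add: mult.commute)
  have "B dvd ([:0,1:]^n - 1) * ([:0,1:]^n - 1)^d"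
    unfolding BQ by (rule mult_dvd_mono[OF d2 d3])
  then show ?case using n1 n2 n_def Suc(2)[symmetric] by (intro exI[of _ n]) auto
qed

lemma dvd_cyc2:
  fixes B :: "'k::field poly"
  assumes pc: "prime CHAR('k)" and ac: "alg_closed TYPE('k)" and ap: "algebraic_over_prime_field TYPE('k)"
    and B0: "B \<noteq> 0" and pB: "poly B 0 \<noteq> 0"
  shows "\<exists>N>0. B dvd [:0,1:]^N - 1"
proof -
  obtain n where n: "n > 0" "B dvd ([:0,1:]^n - 1)^(degree B)"
    using dvd_cyc[OF pc ac ap B0 pB] by blast
  define c where "c = CHAR('k)"
  define m where "m = c ^ degree B"
  have c2: "c \<ge> 2" using pc prime_ge_2_nat c_def by auto
  have "degree B < 2 ^ degree B" by (rule less_exp)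
  also have "\<dots> \<le> m" unfolding m_def using c2 by (simp add: power_mono)
  finally have dm: "degree B \<le> m" by simp
  have pcp: "prime CHAR('k poly)" using pc by simp
  have "(([:0,1:]::'k poly)^n - 1 + 1)^m = ([:0,1:]^n - 1)^m + 1^m"
    by (rule freshmans_dream'[OF pcp]) (simp add: m_def c_def)
  then have "(([:0,1:]::'k poly)^n)^m = ([:0,1:]^n - 1)^m + 1" by simp
  then have e: "(([:0,1:]::'k poly)^n - 1)^m = [:0,1:]^(n*m) - 1"
    by (simp only: power_mult eq_diff_eq)
  have "B dvd ([:0,1:]^n - 1)^m"
    using dvd_trans[OF n(2) le_imp_power_dvd[OF dm]] .
  then have "B dvd [:0,1:]^(n*m) - 1" using e by simp
  moreover have "n * m > 0" using n c2 m_def by simp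
  ultimately show ?thesis by blast
qed


lemma conv_S:
  assumes "finite S" "supp a \<subseteq> S"
  shows "conv f a v = (\<Sum>w\<in>S. f (v - w) * a w)"
  unfolding conv_def by (rule sum.mono_neutral_left) (use assms in \<open>auto simp: supp_def\<close>)

lemma supp_conv:
  "supp (conv c a) \<subseteq> (\<lambda>(t,u). t + u) ` (supp c \<times> supp a)"
proof
  fix w assume "w \<in> supp (conv c a)"
  then have "(\<Sum>u\<in>supp a. c (w - u) * a u) \<noteq> 0" by (simp add: supp_def conv_def)
  then obtain u where u: "u \<in> supp a" "c (w - u) * a u \<noteq> 0" by (meson sum.neutral)
  then have "w - u \<in> supp c" by (auto simp: supp_def)
  then show "w \<in> (\<lambda>(t,u). t + u) ` (supp c \<times> supp a)"
    using u(1) by (intro image_eqI[of _ _ "(w - u, u)"]) auto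
qed

lemma finsupp_conv:
  assumes "finsupp c" "finsupp a"
  shows "finsupp (conv c a)"
proof -
  have "finite ((\<lambda>(t,u). t + u) ` (supp c \<times> supp a))"
    using assms by (simp add: finsupp_def supp_def)
  then show ?thesis using supp_conv[of c a] unfolding finsupp_def supp_def
    by (rule finite_subset[rotated])
qed

lemma conv_conv_zero:
  fixes f :: "'l::ab_group_add \<Rightarrow> 'k::comm_ring_1"
  assumes fc: "finsupp c" and fa: "finsupp a" and z: "conv f a = (\<lambda>_. 0)"
  shows "conv f (conv c a) = (\<lambda>_. 0)"
proof
  fix v
  define C where "C = supp c"
  define A where "A = supp a"
  define S where "S = (\<lambda>(t,u). t + u) ` (C \<times> A)"
  have fC: "finite C" and fA: "finite A" using fc fa by (auto simp: C_def A_def finsupp_def supp_def)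
  have fS: "finite S" using fC fA by (simp add: S_def)
  have "conv f (conv c a) v = (\<Sum>w\<in>S. f (v - w) * conv c a w)"
    by (rule conv_S[OF fS]) (use supp_conv[of c a] in \<open>simp add: S_def C_def A_def\<close>)
  also have "\<dots> = (\<Sum>w\<in>S. \<Sum>u\<in>A. f (v - w) * (c (w - u) * a u))"
    by (simp add: conv_def A_def sum_distrib_left)
  also have "\<dots> = (\<Sum>u\<in>A. \<Sum>w\<in>S. f (v - w) * (c (w - u) * a u))"
    by (rule sum.swap)
  also have "\<dots> = (\<Sum>u\<in>A. \<Sum>t\<in>C. f ((v - t) - u) * a u * c t)"
  proof (rule sum.cong[OF refl])
    fix u assume uA: "u \<in> A"
    define h where "h t = f ((v - t) - u) * a u * c t" for t
    have "(\<Sum>w\<in>S. f (v - w) * (c (w - u) * a u)) = (\<Sum>w\<in>S. h (w - u))"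
      by (rule sum.cong[OF refl]) (simp add: h_def algebra_simps)
    also have "\<dots> = (\<Sum>t\<in>(\<lambda>w. w - u) ` S. h t)"
      by (subst sum.reindex) (auto simp: inj_on_def)
    also have "\<dots> = (\<Sum>t\<in>C. h t)"
    proof (rule sum.mono_neutral_right)
      show "finite ((\<lambda>w. w - u) ` S)" using fS by simp
      show "C \<subseteq> (\<lambda>w. w - u) ` S"
      proof
        fix t assume "t \<in> C"
        then have "t + u \<in> S" using uA by (auto simp: S_def)
        then show "t \<in> (\<lambda>w. w - u) ` S" by (intro image_eqI[of _ _ "t + u"]) auto
      qed
      show "\<forall>i\<in>(\<lambda>w. w - u) ` S - C. h i = 0" by (auto simp: h_def C_def supp_def)
    qed
    finally show "(\<Sum>w\<in>S. f (v - w) * (c (w - u) * a u)) = (\<Sum>t\<in>C. f ((v - t) - u) * a u * c t)"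
      by (simp add: h_def)
  qed
  also have "\<dots> = (\<Sum>t\<in>C. c t * (\<Sum>u\<in>A. f ((v - t) - u) * a u))"
    by (subst sum.swap) (simp add: sum_distrib_left sum_distrib_right algebra_simps)
  also have "\<dots> = (\<Sum>t\<in>C. c t * conv f a (v - t))"
    by (simp add: conv_def A_def)
  also have "\<dots> = 0" using z by simp
  finally show "conv f (conv c a) v = 0" .
qed

lemma conv_sum:
  fixes f :: "'l::ab_group_add \<Rightarrow> 'k::comm_ring_1"
  assumes I: "finite I" and fg: "\<forall>i\<in>I. finsupp (g i)"
  shows "conv f (\<lambda>v. \<Sum>i\<in>I. g i v) v = (\<Sum>i\<in>I. conv f (g i) v)"
proof -
  define S where "S = (\<Union>i\<in>I. supp (g i))"
  have fS: "finite S" using I fg by (auto simp: S_def finsupp_def supp_def)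
  have "supp (\<lambda>v. \<Sum>i\<in>I. g i v) \<subseteq> S"
    by (auto simp: S_def supp_def intro: ccontr)
  then have "conv f (\<lambda>v. \<Sum>i\<in>I. g i v) v = (\<Sum>w\<in>S. f (v - w) * (\<Sum>i\<in>I. g i w))"
    by (rule conv_S[OF fS])
  also have "\<dots> = (\<Sum>i\<in>I. \<Sum>w\<in>S. f (v - w) * g i w)"
    by (simp add: sum_distrib_left sum.swap[of _ S])
  also have "\<dots> = (\<Sum>i\<in>I. conv f (g i) v)"
    by (rule sum.cong[OF refl], rule conv_S[symmetric, OF fS]) (auto simp: S_def)
  finally show ?thesis .
qed


definition Rsum :: "(int^'n \<Rightarrow> 'k::comm_ring_1) \<Rightarrow> int^'n \<Rightarrow> 'k poly \<Rightarrow> int^'n \<Rightarrow> 'k" where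
  "Rsum f v B w = (\<Sum>i\<le>degree B. coeff B i * f (w + int i *s v))"

lemma Rsum_gen:
  assumes "degree B \<le> M"
  shows "Rsum f v B w = (\<Sum>i\<le>M. coeff B i * f (w + int i *s v))"
  unfolding Rsum_def by (rule sum.mono_neutral_left) (use assms in \<open>auto simp: coeff_eq_0\<close>)

lemma Rsum_add: "Rsum f v (B1 + B2) w = Rsum f v B1 w + Rsum f v B2 w"
proof -
  define M where "M = max (degree B1) (degree B2)"
  have "degree (B1 + B2) \<le> M" unfolding M_def by (rule degree_add_le) auto
  moreover have "Rsum f v B1 w = (\<Sum>i\<le>M. coeff B1 i * f (w + int i *s v))"
    by (rule Rsum_gen) (simp add: M_def)
  moreover have "Rsum f v B2 w = (\<Sum>i\<le>M. coeff B2 i * f (w + int i *s v))"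
    by (rule Rsum_gen) (simp add: M_def)
  ultimately show ?thesis
    using Rsum_gen[of "B1+B2" M f v w]
    by (simp add: sum.distrib algebra_simps)
qed

lemma Rsum_diff: "Rsum f v (B1 - B2) w = Rsum f v B1 w - Rsum f v B2 w"
proof -
  define M where "M = max (degree B1) (degree B2)"
  have "degree (B1 - B2) \<le> M" unfolding M_def by (rule degree_diff_le) auto
  moreover have "Rsum f v B1 w = (\<Sum>i\<le>M. coeff B1 i * f (w + int i *s v))"
    by (rule Rsum_gen) (simp add: M_def)
  moreover have "Rsum f v B2 w = (\<Sum>i\<le>M. coeff B2 i * f (w + int i *s v))"
    by (rule Rsum_gen) (simp add: M_def)
  ultimately show ?thesis
    using Rsum_gen[of "B1-B2" M f v w]
    by (simp add: sum_subtractf algebra_simps)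
qed

lemma Rsum_smult: "Rsum f v (smult c B) w = c * Rsum f v B w"
  using Rsum_gen[of "smult c B" "degree B"]
  by (simp add: degree_smult_le Rsum_def sum_distrib_left algebra_simps)

lemma Rsum_zero: "Rsum f v 0 w = 0"
  by (simp add: Rsum_def)

lemma Rsum_monom: "Rsum f v (monom c n) w = c * f (w + int n *s v)"
proof -
  have "Rsum f v (monom c n) w = (\<Sum>i\<le>n. coeff (monom c n) i * f (w + int i *s v))"
    by (rule Rsum_gen) (simp add: degree_monom_le)
  also have "\<dots> = c * f (w + int n *s v)"
    by (simp add: coeff_monom if_distrib[where f="\<lambda>x. x * _"] sum.delta cong: if_cong)
  finally show ?thesis .
qed

lemma Rsum_pCons0: "Rsum f v (pCons 0 P) w = Rsum f v P (w + v)"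
proof -
  have "Rsum f v (pCons 0 P) w = (\<Sum>i\<le>Suc (degree P). coeff (pCons 0 P) i * f (w + int i *s v))"
    by (rule Rsum_gen) (simp add: degree_pCons_le)
  also have "\<dots> = (\<Sum>i\<le>degree P. coeff P i * f (w + int (Suc i) *s v))"
    by (subst sum.atMost_Suc_shift) simp
  also have "\<dots> = Rsum f v P (w + v)"
    unfolding Rsum_def
    by (rule sum.cong[OF refl]) (simp add: vector_sadd_rdistrib algebra_simps)
  finally show ?thesis .
qed

lemma Rsum_mult:
  assumes "\<forall>w. Rsum f v B w = 0"
  shows "Rsum f v (Q * B) w = 0"
proof (induction Q arbitrary: w rule: pCons_induct)
  case 0 then show ?case by (simp add: Rsum_zero)
next
  case (pCons a Q)
  have "pCons a Q * B = smult a B + pCons 0 (Q * B)" by (simp add: mult_pCons_left)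
  then show ?case using pCons assms by (simp add: Rsum_add Rsum_smult Rsum_pCons0)
qed

lemma Rsum_cyc: "Rsum f v ([:0,1:]^N - 1) w = f (w + int N *s v) - f w"
proof -
  have "([:0,1:]::'a::comm_ring_1 poly)^N - 1 = monom 1 N - monom 1 0"
    by (simp add: monom_altdef one_pCons)
  moreover have "Rsum f v 1 w = f w" using Rsum_monom[of f v 1 0 w] by simp
  ultimately show ?thesis by (simp add: Rsum_diff Rsum_monom)
qed


lemma Rsum_sum: "finite K \<Longrightarrow> Rsum f v (\<Sum>k\<in>K. P k) w = (\<Sum>k\<in>K. Rsum f v (P k) w)"
  by (induction K rule: finite_induct) (auto simp: Rsum_add Rsum_zero)

lemma supp_sum: "supp (\<lambda>v. \<Sum>i\<in>I. g i v) \<subseteq> (\<Union>i\<in>I. supp (g i))"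
  by (auto simp: supp_def intro: ccontr)

lemma smult_inj:
  fixes vj :: "int^'n"
  assumes "vj \<noteq> 0"
  shows "inj (\<lambda>k::int. k *s vj)"
proof
  fix k k' assume e: "k *s vj = k' *s vj"
  obtain t where t: "vj $ t \<noteq> 0" using assms by (metis vec_eq_iff zero_index)
  have "k * vj $ t = k' * vj $ t" using e by (metis vector_smult_component)
  then show "k = k'" using t by simp
qed

lemma period_j:
  fixes a :: "nat \<Rightarrow> int^'n \<Rightarrow> 'k::field" and bj :: "int^'n \<Rightarrow> 'k" and vj :: "int^'n"
  assumes pc: "prime CHAR('k)" and ac: "alg_closed TYPE('k)" and ap: "algebraic_over_prime_field TYPE('k)"
    and fa: "\<forall>i<l. finsupp (a i)" and bI: "bj \<in> conv_ideal l a" and b0: "bj \<noteq> (\<lambda>_. 0)"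
    and sb: "supp bj \<subseteq> range (\<lambda>k::int. k *s vj)" and v0: "vj \<noteq> 0"
  shows "\<exists>N::nat. N > 0 \<and> (\<forall>f. (\<forall>i<l. conv f (a i) = (\<lambda>_. 0)) \<longrightarrow> (\<forall>w. f (w + int N *s vj) = f w))"
proof -
  obtain c where c: "bj = (\<lambda>v. \<Sum>i<l. conv (c i) (a i) v)" "\<forall>i<l. finsupp (c i)"
    using bI unfolding conv_ideal_def by blast
  have fconv: "\<forall>i\<in>{..<l}. finsupp (conv (c i) (a i))"
    using c(2) fa finsupp_conv by auto
  have "finite (\<Union>i\<in>{..<l}. supp (conv (c i) (a i)))" using fconv by (auto simp: finsupp_def supp_def)
  then have finb: "finite (supp bj)" unfolding c(1) by (rule finite_subset[OF supp_sum])
  have annb: "conv f bj = (\<lambda>_. 0)" if f: "\<forall>i<l. conv f (a i) = (\<lambda>_. 0)" for f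
  proof
    fix u
    have "conv f bj u = (\<Sum>i<l. conv f (conv (c i) (a i)) u)"
      unfolding c(1) by (rule conv_sum[OF _ fconv]) simp
    also have "\<dots> = 0"
    proof (rule sum.neutral, rule ballI)
      fix i assume "i \<in> {..<l}"
      then have "conv f (conv (c i) (a i)) = (\<lambda>_. 0)"
        using conv_conv_zero[of "c i" "a i" f] c(2) fa f by simp
      then show "conv f (conv (c i) (a i)) u = 0" by simp
    qed
    finally show "conv f bj u = 0" .
  qed
  define K where "K = {k. bj (k *s vj) \<noteq> 0}"
  have inj: "inj (\<lambda>k::int. k *s vj)" by (rule smult_inj[OF v0])
  have suppK: "supp bj = (\<lambda>k. k *s vj) ` K"
    using sb by (auto simp: K_def supp_def)
  have finK: "finite K"
    using finb suppK inj by (metis finite_imageD inj_on_subset subset_UNIV)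
  obtain w0 where "bj w0 \<noteq> 0" using b0 by auto
  then have "w0 \<in> supp bj" by (simp add: supp_def)
  then have KE: "K \<noteq> {}" using suppK by auto
  define kmax where "kmax = Max K"
  have kmaxK: "kmax \<in> K" using finK KE kmax_def by simp
  have kle: "k \<le> kmax" if "k \<in> K" for k using finK that kmax_def by simp
  define B where "B = (\<Sum>k\<in>K. monom (bj (k *s vj)) (nat (kmax - k)))"
  have cB: "coeff B 0 = bj (kmax *s vj)"
  proof -
    have "coeff B 0 = (\<Sum>k\<in>K. if k = kmax then bj (k *s vj) else 0)"
      unfolding B_def coeff_sum
      by (rule sum.cong[OF refl]) (use kle in \<open>force simp: coeff_monom\<close>)
    also have "\<dots> = bj (kmax *s vj)" using finK kmaxK by (simp add: sum.delta')
    finally show ?thesis .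
  qed
  have pB: "poly B 0 \<noteq> 0" using cB kmaxK by (simp add: poly_0_coeff_0 K_def)
  then have B0: "B \<noteq> 0" by auto
  obtain N where N: "N > 0" "B dvd [:0,1:]^N - 1" using dvd_cyc2[OF pc ac ap B0 pB] by blast
  obtain Q where Q: "[:0,1:]^N - 1 = B * Q" using N(2) by (elim dvdE)
  have "f (w + int N *s vj) = f w" if f: "\<forall>i<l. conv f (a i) = (\<lambda>_. 0)" for f w
  proof -
    have RB: "Rsum f vj B w' = 0" for w'
    proof -
      have "Rsum f vj B w' = (\<Sum>k\<in>K. bj (k *s vj) * f (w' + int (nat (kmax - k)) *s vj))"
        unfolding B_def by (simp add: Rsum_sum[OF finK] Rsum_monom)
      also have "\<dots> = (\<Sum>k\<in>K. f ((w' + kmax *s vj) - k *s vj) * bj (k *s vj))"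
      proof (rule sum.cong[OF refl])
        fix k assume "k \<in> K"
        then have "int (nat (kmax - k)) = kmax - k" using kle by simp
        then have "w' + int (nat (kmax - k)) *s vj = w' + (kmax - k) *s vj" by (simp only:)
        also have "\<dots> = (w' + kmax *s vj) - k *s vj" by (simp add: vector_sub_rdistrib)
        finally show "bj (k *s vj) * f (w' + int (nat (kmax - k)) *s vj) = f ((w' + kmax *s vj) - k *s vj) * bj (k *s vj)"
          by (metis mult.commute add_diff_eq)
      qed
      also have "\<dots> = (\<Sum>x\<in>supp bj. f ((w' + kmax *s vj) - x) * bj x)"
        unfolding suppK by (subst sum.reindex) (use inj in \<open>auto intro: inj_on_subset\<close>)
      also have "\<dots> = conv f bj (w' + kmax *s vj)" by (simp add: conv_def)
      also have "\<dots> = 0" using annb[OF f] by simp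
      finally show ?thesis .
    qed
    have "Rsum f vj (Q * B) w = 0" by (rule Rsum_mult) (use RB in auto)
    then have "Rsum f vj ([:0,1:]^N - 1) w = 0" using Q by (simp add: mult.commute)
    then show ?thesis by (simp add: Rsum_cyc)
  qed
  then show ?thesis using N(1) by blast
qed


lemma clear_denoms:
  fixes S :: "rat set"
  shows "finite S \<Longrightarrow> \<exists>D::int. D > 0 \<and> (\<forall>x\<in>S. \<exists>z::int. of_int D * x = of_int z)"
proof (induction S rule: finite_induct)
  case empty then show ?case by (intro exI[of _ 1]) auto
next
  case (insert x S)
  obtain D where D: "D > 0" "\<forall>y\<in>S. \<exists>z::int. of_int D * y = of_int z" using insert by blast
  obtain a b where ab: "quotient_of x = (a, b)" by (cases "quotient_of x")
  have b: "b > 0" using quotient_of_denom_pos[OF ab] .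
  have xab: "x = of_int a / of_int b" using quotient_of_div[OF ab] .
  have "\<forall>y\<in>insert x S. \<exists>z::int. of_int (D * b) * y = of_int z"
  proof
    fix y assume "y \<in> insert x S"
    then show "\<exists>z::int. of_int (D * b) * y = of_int z"
    proof
      assume "y = x"
      then show ?thesis using b xab by (intro exI[of _ "D * a"]) simp
    next
      assume "y \<in> S"
      then obtain z where "of_int D * y = of_int z" using D by blast
      then show ?thesis by (intro exI[of _ "b * z"]) (simp add: algebra_simps)
    qed
  qed
  then show ?case using D b by (intro exI[of _ "D * b"]) simp
qed

definition vof :: "int^'n \<Rightarrow> rat^'n" where "vof x = (\<chi> i. of_int (x $ i))"

lemma vof_add: "vof (x + y) = vof x + vof y" by (simp add: vof_def vec_eq_iff)
lemma vof_zero: "vof 0 = 0" by (simp add: vof_def vec_eq_iff)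
lemma vof_smult: "vof (k *s x) = of_int k *s vof x" by (simp add: vof_def vec_eq_iff)
lemma vof_sum: "vof (\<Sum>j\<in>J. g j) = (\<Sum>j\<in>J. vof (g j))"
  by (induction J rule: infinite_finite_induct) (auto simp: vof_add vof_zero)
lemma vof_inj: "vof x = vof y \<Longrightarrow> x = y" by (simp add: vof_def vec_eq_iff)


lemma subgroup_int_smult:
  fixes L :: "(int^'n) set"
  assumes z: "0 \<in> L" and ad: "\<And>x y. x \<in> L \<Longrightarrow> y \<in> L \<Longrightarrow> x + y \<in> L"
    and ng: "\<And>x. x \<in> L \<Longrightarrow> - x \<in> L" and x: "x \<in> L"
  shows "k *s x \<in> L"
proof -
  have n: "int n *s x \<in> L" for n
  proof (induction n)
    case 0 then show ?case using z by simp
  next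
    case (Suc n)
    have "int (Suc n) *s x = int n *s x + x" by (simp add: vector_sadd_rdistrib)
    then show ?case using ad[OF Suc x] by (simp add: add.commute)
  qed
  show ?thesis
  proof (cases "k \<ge> 0")
    case True then show ?thesis using n[of "nat k"] by simp
  next
    case False
    have "k *s x = - (int (nat (- k)) *s x)" using False by (simp add: vec_eq_iff)
    then show ?thesis using ng[OF n[of "nat (- k)"]] by (simp only:)
  qed
qed

lemma subgroup_comb:
  fixes L :: "(int^'n) set"
  assumes z: "0 \<in> L" and ad: "\<And>x y. x \<in> L \<Longrightarrow> y \<in> L \<Longrightarrow> x + y \<in> L"
    and ng: "\<And>x. x \<in> L \<Longrightarrow> - x \<in> L" and u: "\<forall>j. u j \<in> L"
  shows "(\<Sum>j\<in>J. k j *s u j) \<in> L"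
proof (induction J rule: infinite_finite_induct)
  case (insert j J)
  have "k j *s u j \<in> L" using subgroup_int_smult[OF z ad ng] u by blast
  then show ?case using insert ad by simp
qed (use z in auto)

lemma rat_indep:
  fixes u :: "'n::finite \<Rightarrow> int^'m"
  assumes li: "lin_indep_int u" and s: "(\<Sum>j\<in>UNIV. q j *s vof (u j)) = 0"
  shows "q j = 0"
proof -
  obtain D where D: "D > 0" "\<forall>x\<in>range q. \<exists>z::int. of_int D * x = of_int z"
    using clear_denoms[of "range q"] by auto
  have "\<exists>z. \<forall>j. of_int D * q j = of_int (z j)" by (rule choice) (use D(2) in auto)
  then obtain z where z: "\<forall>j. of_int D * q j = of_int (z j)" by blast
  have "vof (\<Sum>j\<in>UNIV. z j *s u j) = (\<Sum>j\<in>UNIV. of_int (z j) *s vof (u j))"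
    by (simp add: vof_sum vof_smult)
  also have "\<dots> = of_int D *s (\<Sum>j\<in>UNIV. q j *s vof (u j))"
    using z by (simp add: vec.scale_sum_right vector_smult_assoc)
  also have "\<dots> = vof 0" using s by (simp add: vof_zero)
  finally have "(\<Sum>j\<in>UNIV. z j *s u j) = 0" by (rule vof_inj)
  then have "z j = 0" using li unfolding lin_indep_int_def by blast
  then show ?thesis using z[rule_format, of j] D(1) by simp
qed


lemma finite_index:
  fixes L :: "(int^'n) set" and u :: "'n \<Rightarrow> int^'n"
  assumes z: "0 \<in> L" and ad: "\<And>x y. x \<in> L \<Longrightarrow> y \<in> L \<Longrightarrow> x + y \<in> L"
    and ng: "\<And>x. x \<in> L \<Longrightarrow> - x \<in> L" and uL: "\<forall>j. u j \<in> L" and li: "lin_indep_int u"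
  shows "finite ((\<lambda>x. (\<lambda>y. x + y) ` L) ` UNIV)"
proof -
  define w where "w j = vof (u j)" for j
  have winj: "inj w"
  proof
    fix i j assume e: "w i = w j"
    show "i = j"
    proof (rule ccontr)
      assume ij: "i \<noteq> j"
      define q where "q k = (if k = i then 1 else if k = j then -1 else 0 :: rat)" for k
      have "(\<Sum>k\<in>UNIV. q k *s w k) = (\<Sum>k\<in>UNIV. (if k = i then w k else 0) - (if k = j then w k else 0))"
        by (rule sum.cong[OF refl]) (use ij in \<open>auto simp: q_def\<close>)
      also have "\<dots> = w i - w j" by (simp add: sum_subtractf)
      also have "\<dots> = 0" using e by simp
      finally have "q i = 0" using rat_indep[OF li, of q] by (simp add: w_def)
      then show False by (simp add: q_def)
    qed
  qed
  have ind: "\<not> vec.dependent (range w)"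
  proof
    assume "vec.dependent (range w)"
    then obtain c where c: "\<exists>x\<in>range w. c x \<noteq> 0" "(\<Sum>x\<in>range w. c x *s x) = 0"
      using vec.dependent_finite[of "range w"] by auto
    have "(\<Sum>j\<in>UNIV. c (w j) *s w j) = 0"
      using c(2) by (simp add: sum.reindex[OF winj])
    then have "c (w j) = 0" for j using rat_indep[OF li, of "\<lambda>j. c (w j)"] by (simp add: w_def)
    then show False using c(1) by auto
  qed
  have card: "card (range w) = CARD('n)" by (simp add: card_image winj)
  have span: "UNIV \<subseteq> vec.span (range w)"
  proof (rule vec.card_ge_dim_independent)
    show "vec.dim (UNIV::(rat^'n) set) \<le> card (range w)" by (metis vec_dim_card card order_refl)
  qed (use ind in auto)
  have "\<exists>D. D > 0 \<and> D *s axis i 1 \<in> L" for i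
  proof -
    have "vof (axis i 1) \<in> vec.span (range w)" using span by auto
    then obtain c where c: "(\<Sum>x\<in>range w. c x *s x) = vof (axis i 1)"
      using vec.span_finite[of "range w"] by auto
    then have c2: "(\<Sum>j\<in>UNIV. c (w j) *s w j) = vof (axis i 1)"
      by (simp add: sum.reindex[OF winj])
    obtain D where D: "D > 0" "\<forall>x\<in>range (\<lambda>j. c (w j)). \<exists>z::int. of_int D * x = of_int z"
      using clear_denoms[of "range (\<lambda>j. c (w j))"] by auto
    have "\<exists>z. \<forall>j. of_int D * c (w j) = of_int (z j)" by (rule choice) (use D(2) in auto)
    then obtain zz where zz: "\<forall>j. of_int D * c (w j) = of_int (zz j)" by blast
    have "vof (\<Sum>j\<in>UNIV. zz j *s u j) = (\<Sum>j\<in>UNIV. of_int (zz j) *s w j)"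
      by (simp add: vof_sum vof_smult w_def)
    also have "\<dots> = of_int D *s (\<Sum>j\<in>UNIV. c (w j) *s w j)"
      using zz by (simp add: vec.scale_sum_right vector_smult_assoc)
    also have "\<dots> = vof (D *s axis i 1)" using c2 by (simp add: vof_smult)
    finally have "D *s axis i 1 = (\<Sum>j\<in>UNIV. zz j *s u j)" by (rule vof_inj[symmetric])
    then show ?thesis using D(1) subgroup_comb[OF z ad ng uL] by metis
  qed
  then obtain D where D: "\<forall>i. D i > 0 \<and> D i *s axis i 1 \<in> L" by metis
  define R where "R = {y::int^'n. \<forall>i. y $ i \<in> {0..<D i}}"
  have finR: "finite R"
  proof (rule finite_subset)
    show "R \<subseteq> (\<lambda>g. \<chi> i. g i) ` (PiE UNIV (\<lambda>i. {0..<D i}))"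
    proof
      fix y assume "y \<in> R"
      then show "y \<in> (\<lambda>g. \<chi> i. g i) ` (PiE UNIV (\<lambda>i. {0..<D i}))"
        by (intro image_eqI[of _ _ "\<lambda>i. y $ i"]) (auto simp: R_def PiE_iff)
    qed
    show "finite ((\<lambda>g. \<chi> i. g i) ` (PiE UNIV (\<lambda>i. {0..<D i})))"
      by (intro finite_imageI finite_PiE) auto
  qed
  have "(\<lambda>x. (\<lambda>y. x + y) ` L) ` UNIV \<subseteq> (\<lambda>x. (\<lambda>y. x + y) ` L) ` R"
  proof
    fix C assume "C \<in> (\<lambda>x. (\<lambda>y. x + y) ` L) ` UNIV"
    then obtain x where C: "C = (\<lambda>y. x + y) ` L" by blast
    define r where "r = (\<chi> i. x $ i mod D i)"
    have rR: "r \<in> R" using D by (auto simp: R_def r_def)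
    have "x - r = (\<Sum>i\<in>UNIV. (x $ i div D i) *s (D i *s axis i 1))"
    proof (subst vec_eq_iff, rule allI)
      fix k
      have "(\<Sum>i\<in>UNIV. (x $ i div D i) *s (D i *s axis i 1)) $ k
          = (\<Sum>i\<in>UNIV. if i = k then (x $ i div D i) * D i else 0)"
        unfolding sum_component by (rule sum.cong[OF refl]) (simp add: axis_def)
      also have "\<dots> = (x $ k div D k) * D k" by simp
      finally show "(x - r) $ k = (\<Sum>i\<in>UNIV. (x $ i div D i) *s (D i *s axis i 1)) $ k"
        by (simp add: r_def minus_mod_eq_div_mult)
    qed
    then have t: "x - r \<in> L"
      using subgroup_comb[OF z ad ng, of "\<lambda>i. D i *s axis i 1"] D by simp
    have "(\<lambda>y. x + y) ` L = (\<lambda>y. r + y) ` L"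
    proof
      show "(\<lambda>y. x + y) ` L \<subseteq> (\<lambda>y. r + y) ` L"
      proof
        fix a assume "a \<in> (\<lambda>y. x + y) ` L"
        then obtain y where y: "y \<in> L" "a = x + y" by blast
        then show "a \<in> (\<lambda>y. r + y) ` L"
          using ad[OF t y(1)] by (intro image_eqI[of _ _ "(x - r) + y"]) auto
      qed
      show "(\<lambda>y. r + y) ` L \<subseteq> (\<lambda>y. x + y) ` L"
      proof
        fix a assume "a \<in> (\<lambda>y. r + y) ` L"
        then obtain y where y: "y \<in> L" "a = r + y" by blast
        then show "a \<in> (\<lambda>y. x + y) ` L"
          using ad[OF ng[OF t] y(1)] by (intro image_eqI[of _ _ "- (x - r) + y"]) auto
      qed
    qed
    then show "C \<in> (\<lambda>x. (\<lambda>y. x + y) ` L) ` R" using C rR by blast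
  qed
  then show ?thesis using finite_imageI[OF finR] by (rule finite_subset)
qed


theorem corollary5p7:
  fixes p :: nat
    and l :: nat
    and a :: "nat \<Rightarrow> int ^ 'n \<Rightarrow> 'k::field"
    and b :: "'n \<Rightarrow> int ^ 'n \<Rightarrow> 'k"
    and v :: "'n \<Rightarrow> int ^ 'n"
  assumes "prime p" and "CHAR('k) = p"
    and "alg_closed TYPE('k)" and "algebraic_over_prime_field TYPE('k)"
    and "\<forall>i<l. finsupp (a i)"
    and "\<forall>j. b j \<in> conv_ideal l a \<and> b j \<noteq> (\<lambda>_. 0)"
    and "\<forall>j. supp (b j) \<subseteq> range (\<lambda>k::int. k *s v j)"
    and "lin_indep_int v"
  shows "\<exists>m :: 'n \<Rightarrow> int. (\<forall>j. m j > 0) \<and>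
           (\<forall>f :: int ^ 'n \<Rightarrow> 'k. (\<forall>i<l. conv f (a i) = (\<lambda>_. 0)) \<longrightarrow>
              pluri_periodic f \<and>
              {(\<Sum>j\<in>UNIV. (k j * m j) *s v j) | k :: 'n \<Rightarrow> int. True} \<subseteq> period_lattice f)"
proof -
  have pc: "prime CHAR('k)" using assms(1,2) by simp
  have v0: "v j \<noteq> 0" for j
  proof
    assume vj: "v j = 0"
    define c where "c i = (if i = j then 1 else 0 :: int)" for i
    have "(\<Sum>i\<in>UNIV. c i *s v i) = (\<Sum>i\<in>UNIV. if i = j then v i else 0)"
      by (rule sum.cong[OF refl]) (simp add: c_def)
    also have "\<dots> = 0" using vj by simp
    finally have "c j = 0" using assms(8) unfolding lin_indep_int_def by blast
    then show False by (simp add: c_def)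
  qed
  have "\<forall>j. \<exists>N::nat. N > 0 \<and> (\<forall>f. (\<forall>i<l. conv f (a i) = (\<lambda>_. 0)) \<longrightarrow> (\<forall>w. f (w + int N *s v j) = f w))"
  proof
    fix j show "\<exists>N::nat. N > 0 \<and> (\<forall>f. (\<forall>i<l. conv f (a i) = (\<lambda>_. 0)) \<longrightarrow> (\<forall>w. f (w + int N *s v j) = f w))"
      by (rule period_j[OF pc assms(3,4,5)]) (use assms(6,7) v0 in auto)
  qed
  then obtain N where N: "\<forall>j. N j > 0 \<and> (\<forall>f. (\<forall>i<l. conv f (a i) = (\<lambda>_. 0)) \<longrightarrow> (\<forall>w. f (w + int (N j) *s v j) = f w))"
    by metis
  define m where "m j = int (N j)" for j
  have mpos: "\<forall>j. m j > 0" using N by (simp add: m_def)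
  have "(\<forall>f :: int ^ 'n \<Rightarrow> 'k. (\<forall>i<l. conv f (a i) = (\<lambda>_. 0)) \<longrightarrow>
              pluri_periodic f \<and>
              {(\<Sum>j\<in>UNIV. (k j * m j) *s v j) | k :: 'n \<Rightarrow> int. True} \<subseteq> period_lattice f)"
  proof (intro allI impI)
    fix f :: "int ^ 'n \<Rightarrow> 'k"
    assume f: "\<forall>i<l. conv f (a i) = (\<lambda>_. 0)"
    define L where "L = period_lattice f"
    have Lmem: "x \<in> L \<longleftrightarrow> (\<forall>y. f (y + x) = f y)" for x
      by (auto simp: L_def period_lattice_def fun_eq_iff)
    have z: "0 \<in> L" by (simp add: Lmem)
    have ad: "x + y \<in> L" if "x \<in> L" "y \<in> L" for x y
      using that unfolding Lmem by (metis add.assoc)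
    have ng: "- x \<in> L" if "x \<in> L" for x
      using that unfolding Lmem by (metis add.commute diff_add_cancel diff_conv_add_uminus)
    define u where "u j = m j *s v j" for j
    have uL: "\<forall>j. u j \<in> L" using N f by (simp add: Lmem u_def m_def)
    have li: "lin_indep_int u"
      unfolding lin_indep_int_def
    proof (intro allI impI)
      fix c :: "'n \<Rightarrow> int" and j
      assume "(\<Sum>j\<in>UNIV. c j *s u j) = 0"
      then have "(\<Sum>j\<in>UNIV. (c j * m j) *s v j) = 0" by (simp add: u_def vector_smult_assoc)
      then have "c j * m j = 0"
        using spec[OF assms(8)[unfolded lin_indep_int_def], of "\<lambda>j. c j * m j"] by simp
      then show "c j = 0" using mpos by (metis less_irrefl mult_eq_0_iff)
    qed
    have "pluri_periodic f"
      unfolding pluri_periodic_def L_def[symmetric] by (rule finite_index[OF z ad ng uL li])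
    moreover have "{(\<Sum>j\<in>UNIV. (k j * m j) *s v j) | k :: 'n \<Rightarrow> int. True} \<subseteq> L"
    proof
      fix x assume "x \<in> {(\<Sum>j\<in>UNIV. (k j * m j) *s v j) | k :: 'n \<Rightarrow> int. True}"
      then obtain k where k: "x = (\<Sum>j\<in>UNIV. (k j * m j) *s v j)" by blast
      then have "x = (\<Sum>j\<in>UNIV. k j *s u j)" by (simp add: u_def vector_smult_assoc)
      then show "x \<in> L" using subgroup_comb[OF z ad ng uL] by simp
    qed
    ultimately show "pluri_periodic f \<and> {(\<Sum>j\<in>UNIV. (k j * m j) *s v j) | k :: 'n \<Rightarrow> int. True} \<subseteq> period_lattice f"
      by (simp add: L_def)
  qed
  then show ?thesis using mpos by blast
qed

end
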